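(* The following two statements are equivalent: (a) Every 2-connected cubic graph $G$ admits a proper $5$-edge-coloring $c$ with $|N_G(c)|\le 5$. (b) There exists a sublinear function $f:\mathbb{N}\to\mathbb{N}$ such that every 2-connected cubic graph $G$ admits a proper $5$-edge-coloring $c$ with $|N_G(c)|\le f(|V(G)|)$.
   Context: Graphs are finite, undirected, loopless, and may contain parallel edges. A proper $k$-edge-coloring of $G$ is a map $c:E(G)\to\{1,\dots,k\}$ with adjacent edges receiving different colors. For such $c$ and a vertex $v$, $S_c(v)$ is the set of colors on edges incident to $v$. An edge $uv$ of a cubic graph is poor if $|S_c(u)\cup S_c(v)|=3$, rich if $|S_c(u)\cup S_c(v)|=5$, and abnormal if it is neither poor nor rich. $N_G(c)$ denotes the set of abnormal edges of $G$ with respect to $c$. A function $f:\mathbb{N}\to\mathbb{N}$ is sublinear if $\lim_{n\to\infty} f(n)/n=0$. *)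

theory Defs
  imports Complex_Main
begin

text \<open>A finite loopless multigraph: vertex set V, edge set E (edges are names,
  so parallel edges are allowed), and an endpoint map ends assigning to each
  edge its set of exactly two distinct endpoints.  Vertices and edges are
  labelled by natural numbers (every finite multigraph has such a copy).\<close>

definition multigraph :: "nat set \<Rightarrow> nat set \<Rightarrow> (nat \<Rightarrow> nat set) \<Rightarrow> bool" where
  "multigraph V E ends \<longleftrightarrow> finite V \<and> finite E \<and>
     (\<forall>e\<in>E. ends e \<subseteq> V \<and> card (ends e) = 2)"

definition incident_edges :: "nat set \<Rightarrow> (nat \<Rightarrow> nat set) \<Rightarrow> nat \<Rightarrow> nat set" where
  "incident_edges E ends v = {e\<in>E. v \<in> ends e}"

definition cubic :: "nat set \<Rightarrow> nat set \<Rightarrow> (nat \<Rightarrow> nat set) \<Rightarrow> bool" where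
  "cubic V E ends \<longleftrightarrow> multigraph V E ends \<and>
     (\<forall>v\<in>V. card (incident_edges E ends v) = 3)"

definition adj_in :: "nat set \<Rightarrow> (nat \<Rightarrow> nat set) \<Rightarrow> nat set \<Rightarrow> nat \<Rightarrow> nat \<Rightarrow> bool" where
  "adj_in E ends S u v \<longleftrightarrow> u \<in> S \<and> v \<in> S \<and> (\<exists>e\<in>E. ends e = {u, v})"

definition connected_on :: "nat set \<Rightarrow> (nat \<Rightarrow> nat set) \<Rightarrow> nat set \<Rightarrow> bool" where
  "connected_on E ends S \<longleftrightarrow> S \<noteq> {} \<and>
     (\<forall>u\<in>S. \<forall>v\<in>S. (adj_in E ends S)\<^sup>*\<^sup>* u v)"

definition two_connected :: "nat set \<Rightarrow> nat set \<Rightarrow> (nat \<Rightarrow> nat set) \<Rightarrow> bool" where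
  "two_connected V E ends \<longleftrightarrow> card V \<ge> 2 \<and> connected_on E ends V \<and>
     (\<forall>v\<in>V. connected_on E ends (V - {v}))"

definition proper_edge_coloring ::
  "nat \<Rightarrow> nat set \<Rightarrow> (nat \<Rightarrow> nat set) \<Rightarrow> (nat \<Rightarrow> nat) \<Rightarrow> bool" where
  "proper_edge_coloring k E ends c \<longleftrightarrow>
     (\<forall>e\<in>E. c e \<in> {1..k}) \<and>
     (\<forall>e\<in>E. \<forall>e'\<in>E. e \<noteq> e' \<and> ends e \<inter> ends e' \<noteq> {} \<longrightarrow> c e \<noteq> c e')"

definition colors_at :: "nat set \<Rightarrow> (nat \<Rightarrow> nat set) \<Rightarrow> (nat \<Rightarrow> nat) \<Rightarrow> nat \<Rightarrow> nat set" where
  "colors_at E ends c v = c ` incident_edges E ends v"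

definition edge_color_span :: "nat set \<Rightarrow> (nat \<Rightarrow> nat set) \<Rightarrow> (nat \<Rightarrow> nat) \<Rightarrow> nat \<Rightarrow> nat" where
  "edge_color_span E ends c e = card (\<Union>x\<in>ends e. colors_at E ends c x)"

definition poor_edge where
  "poor_edge E ends c e \<longleftrightarrow> edge_color_span E ends c e = 3"

definition rich_edge where
  "rich_edge E ends c e \<longleftrightarrow> edge_color_span E ends c e = 5"

text \<open>N_G(c): the set of abnormal edges.\<close>
definition abnormal_edges :: "nat set \<Rightarrow> (nat \<Rightarrow> nat set) \<Rightarrow> (nat \<Rightarrow> nat) \<Rightarrow> nat set" where
  "abnormal_edges E ends c = {e\<in>E. \<not> poor_edge E ends c e \<and> \<not> rich_edge E ends c e}"

definition sublinear :: "(nat \<Rightarrow> nat) \<Rightarrow> bool" where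
  "sublinear f \<longleftrightarrow> (\<lambda>n. real (f n) / real n) \<longlonglongrightarrow> 0"

end

theory Submission imports Defs "HOL-Library.Nat_Bijection" begin

lemma adj_sym: "adj_in E ends S a b \<Longrightarrow> adj_in E ends S b a"
  by (auto simp: adj_in_def insert_commute)

lemma reach_sym: "(adj_in E ends S)\<^sup>*\<^sup>* a b \<Longrightarrow> (adj_in E ends S)\<^sup>*\<^sup>* b a"
proof (induction rule: rtranclp.induct)
  case (rtrancl_into_rtrancl a b c)
  then show ?case by (meson adj_sym converse_rtranclp_into_rtranclp)
qed auto

lemma reach_mono: "(adj_in E ends S)\<^sup>*\<^sup>* a b \<Longrightarrow> S \<subseteq> T \<Longrightarrow> E \<subseteq> E2 \<Longrightarrow> (adj_in E2 ends T)\<^sup>*\<^sup>* a b"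
proof (induction rule: rtranclp.induct)
  case (rtrancl_into_rtrancl a b c)
  then have "adj_in E2 ends T b c" by (auto simp: adj_in_def)
  then show ?case using rtrancl_into_rtrancl by (meson rtranclp.rtrancl_into_rtrancl)
qed auto

lemma card2_split: "card A = 2 \<Longrightarrow> u \<in> A \<Longrightarrow> \<exists>z. z \<noteq> u \<and> A = {u, z}"
  unfolding card_2_iff by auto

locale cg =
  fixes V E ends u v e0
  assumes cub: "cubic V E ends" and tc: "two_connected V E ends"
  and e0E: "e0 \<in> E" and e0e: "ends e0 = {u,v}" and uv: "u \<noteq> v"
begin

lemma mg: "multigraph V E ends" using cub by (simp add: cubic_def)
lemma finV: "finite V" and finE: "finite E" using mg by (auto simp: multigraph_def)
lemma endsV: "e \<in> E \<Longrightarrow> ends e \<subseteq> V" and ends2: "e \<in> E \<Longrightarrow> card (ends e) = 2"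
  using mg by (auto simp: multigraph_def)
lemma uV: "u \<in> V" and vV: "v \<in> V" using endsV[OF e0E] e0e by auto
lemma inc3: "x \<in> V \<Longrightarrow> card (incident_edges E ends x) = 3" using cub by (simp add: cubic_def)

lemma reach_uv_aux:
  assumes "(adj_in E ends S)\<^sup>*\<^sup>* y z" "z \<in> S" "z = u \<or> z = v"
  shows "(u \<in> S \<and> (adj_in (E-{e0}) ends S)\<^sup>*\<^sup>* y u) \<or> (v \<in> S \<and> (adj_in (E-{e0}) ends S)\<^sup>*\<^sup>* y v)"
  using assms(1)
proof (induction rule: converse_rtranclp_induct)
  case base then show ?case using assms(2,3) by auto
next
  case (step y y')
  show ?case
  proof (cases "y = u \<or> y = v")
    case True with step(1) show ?thesis by (auto simp: adj_in_def)
  next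
    case False
    from step(1) obtain e where e: "e \<in> E" "ends e = {y,y'}" "y \<in> S" "y' \<in> S" by (auto simp: adj_in_def)
    have "e \<noteq> e0" using e(2) e0e False by auto
    then have "adj_in (E-{e0}) ends S y y'" using e by (auto simp: adj_in_def)
    with step(3) show ?thesis by (meson converse_rtranclp_into_rtranclp)
  qed
qed

lemma reach_uv:
  assumes "connected_on E ends S" "y \<in> S" "u \<in> S \<or> v \<in> S"
  shows "(u \<in> S \<and> (adj_in (E-{e0}) ends S)\<^sup>*\<^sup>* y u) \<or> (v \<in> S \<and> (adj_in (E-{e0}) ends S)\<^sup>*\<^sup>* y v)"
proof -
  obtain z where z: "z \<in> S" "z = u \<or> z = v" using assms(3) by auto
  have "(adj_in E ends S)\<^sup>*\<^sup>* y z" using assms(1,2) z(1) by (auto simp: connected_on_def)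
  then show ?thesis using reach_uv_aux z by blast
qed

lemma u_reach_v: "(adj_in (E-{e0}) ends V)\<^sup>*\<^sup>* u v"
proof -
  have c1: "connected_on E ends (V - {u})" using tc uV by (auto simp: two_connected_def)
  have "incident_edges E ends u - {e0} \<noteq> {}"
  proof
    assume "incident_edges E ends u - {e0} = {}"
    then have "incident_edges E ends u \<subseteq> {e0}" by auto
    then have "card (incident_edges E ends u) \<le> 1"
      using card_mono[of "{e0}" "incident_edges E ends u"] by simp
    then show False using inc3[OF uV] by simp
  qed
  then obtain e1 where e1: "e1 \<in> E" "e1 \<noteq> e0" "u \<in> ends e1" by (auto simp: incident_edges_def)
  obtain z where z: "z \<noteq> u" "ends e1 = {u, z}" using card2_split[OF ends2[OF e1(1)] e1(3)] by blast
  have zV: "z \<in> V" using endsV[OF e1(1)] z by auto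
  have a1: "adj_in (E-{e0}) ends V u z" using e1 z zV uV by (auto simp: adj_in_def)
  show ?thesis
  proof (cases "z = v")
    case True then show ?thesis using a1 by auto
  next
    case False
    have "(adj_in (E-{e0}) ends (V-{u}))\<^sup>*\<^sup>* z v"
      using reach_uv[OF c1, of z] zV z(1) vV uv by auto
    then have "(adj_in (E-{e0}) ends V)\<^sup>*\<^sup>* z v" by (rule reach_mono) auto
    then show ?thesis using a1 by (meson converse_rtranclp_into_rtranclp)
  qed
qed

lemma conn_minus: assumes "y \<in> V" shows "(adj_in (E-{e0}) ends V)\<^sup>*\<^sup>* y u"
proof -
  have c: "connected_on E ends V" using tc by (simp add: two_connected_def)
  show ?thesis using reach_uv[OF c assms] uV reach_sym[OF u_reach_v]
    by (meson rtranclp_trans)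
qed


end

definition enc :: "nat \<Rightarrow> nat \<Rightarrow> nat" where "enc i x = prod_encode (i, x)"
definition nxt :: "nat \<Rightarrow> nat \<Rightarrow> nat" where "nxt k j = (if Suc j = k then 0 else Suc j)"

lemma enc_eq[simp]: "enc i x = enc j y \<longleftrightarrow> i = j \<and> x = y" by (simp add: enc_def)
lemma inj_enc: "inj (enc i)" by (simp add: inj_def)
lemma even_odd_ne[simp]: "2 * (a::nat) \<noteq> 2 * b + 1" "2 * b + 1 \<noteq> 2 * (a::nat)"
  "2 * (a::nat) \<noteq> Suc (2 * b)" "Suc (2 * b) \<noteq> 2 * (a::nat)" by presburger+

context cg begin

definition VH :: "nat \<Rightarrow> nat set" where "VH k = (\<lambda>(i,x). enc i x) ` ({..<k} \<times> V)"
definition EH :: "nat \<Rightarrow> nat set" where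
  "EH k = (\<lambda>(i,e). 2 * enc i e) ` ({..<k} \<times> (E - {e0})) \<union> (\<lambda>p. 2*p+1) ` {..<k}"
definition endsH :: "nat \<Rightarrow> nat \<Rightarrow> nat set" where
  "endsH k h = (if even h then (case prod_decode (h div 2) of (i,e) \<Rightarrow> enc i ` ends e)
     else {enc (h div 2) v, enc (nxt k (h div 2)) u})"

lemma endsH_copy[simp]: "endsH k (2 * enc i e) = enc i ` ends e"
  by (simp add: endsH_def enc_def)
lemma endsH_con[simp]: "endsH k (2 * p + 1) = {enc p v, enc (nxt k p) u}"
  by (simp add: endsH_def)
lemma endsH_con'[simp]: "endsH k (Suc (2 * p)) = {enc p v, enc (nxt k p) u}"
  using endsH_con by simp

lemma VH_mem: "a \<in> VH k \<longleftrightarrow> (\<exists>i x. i < k \<and> x \<in> V \<and> a = enc i x)"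
  by (auto simp: VH_def)
lemma enc_VH[simp]: "enc i x \<in> VH k \<longleftrightarrow> i < k \<and> x \<in> V"
  by (auto simp: VH_def)
lemma copy_EH[simp]: "2 * enc i e \<in> EH k \<longleftrightarrow> i < k \<and> e \<in> E \<and> e \<noteq> e0"
  by (auto simp: EH_def)
lemma con_EH[simp]: "2 * p + 1 \<in> EH k \<longleftrightarrow> p < k"
  by (auto simp: EH_def)
lemma con_EH'[simp]: "Suc (2 * p) \<in> EH k \<longleftrightarrow> p < k"
  using con_EH by simp

lemma finVH: "finite (VH k)" using finV by (simp add: VH_def)
lemma finEH: "finite (EH k)" using finE by (simp add: EH_def)

lemma cardVH: "card (VH k) = k * card V"
proof -
  have "inj_on (\<lambda>(i,x). enc i x) ({..<k} \<times> V)" by (auto simp: inj_on_def)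
  then show ?thesis by (simp add: VH_def card_image card_cartesian_product)
qed

lemma inc_H:
  assumes "i < k" "x \<in> V"
  shows "incident_edges (EH k) (endsH k) (enc i x) =
    (\<lambda>e. 2 * enc i e) ` (incident_edges E ends x - {e0}) \<union>
    (\<lambda>p. 2*p+1) ` {p. p < k \<and> (p = i \<and> x = v \<or> nxt k p = i \<and> x = u)}"
proof (rule set_eqI, rule iffI)
  fix h assume h: "h \<in> incident_edges (EH k) (endsH k) (enc i x)"
  then have hE: "h \<in> EH k" and hx: "enc i x \<in> endsH k h" by (auto simp: incident_edges_def)
  from hE consider (c) i' e where "i' < k" "e \<in> E" "e \<noteq> e0" "h = 2 * enc i' e"
    | (n) p where "p < k" "h = 2*p+1"
    by (auto simp: EH_def)
  then show "h \<in> (\<lambda>e. 2 * enc i e) ` (incident_edges E ends x - {e0}) \<union>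
    (\<lambda>p. 2*p+1) ` {p. p < k \<and> (p = i \<and> x = v \<or> nxt k p = i \<and> x = u)}"
  proof cases
    case c then show ?thesis using hx by (auto simp: incident_edges_def)
  next
    case n then show ?thesis using hx by auto
  qed
next
  fix h assume "h \<in> (\<lambda>e. 2 * enc i e) ` (incident_edges E ends x - {e0}) \<union>
    (\<lambda>p. 2*p+1) ` {p. p < k \<and> (p = i \<and> x = v \<or> nxt k p = i \<and> x = u)}"
  then show "h \<in> incident_edges (EH k) (endsH k) (enc i x)"
    using assms by (auto simp: incident_edges_def)
qed

lemma card_inc_H:
  assumes k2: "2 \<le> k" and "i < k" "x \<in> V"
  shows "card (incident_edges (EH k) (endsH k) (enc i x)) = 3"
proof -
  let ?A = "(\<lambda>e. 2 * enc i e) ` (incident_edges E ends x - {e0})"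
  let ?P = "{p. p < k \<and> (p = i \<and> x = v \<or> nxt k p = i \<and> x = u)}"
  have fI: "finite (incident_edges E ends x)" using finE by (simp add: incident_edges_def)
  have cA: "card ?A = card (incident_edges E ends x - {e0})"
    by (rule card_image) (auto simp: inj_on_def)
  have disj: "?A \<inter> (\<lambda>p. 2*p+1) ` ?P = {}" by auto
  have cP: "card ((\<lambda>p. 2*p+1) ` ?P) = card ?P" by (rule card_image) (auto simp: inj_on_def)
  have "card (?A \<union> (\<lambda>p. 2*p+1) ` ?P) = card ?A + card ?P"
    using disj cP fI by (subst card_Un_disjoint) auto
  moreover have "card ?A + card ?P = 3"
  proof (cases "x = u \<or> x = v")
    case True
    have e0in: "e0 \<in> incident_edges E ends x" using True e0E e0e by (auto simp: incident_edges_def)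
    have c2: "card (incident_edges E ends x - {e0}) = 2" using inc3[OF assms(3)] e0in fI by simp
    have "?P = {if x = v then i else (if i = 0 then k - 1 else i - 1)}"
      using True uv assms(2) k2 by (auto simp: nxt_def split: if_splits)
    then show ?thesis using cA c2 by simp
  next
    case False
    have e0in: "e0 \<notin> incident_edges E ends x" using False e0E e0e by (auto simp: incident_edges_def)
    have "?P = {}" using False by auto
    then show ?thesis using cA e0in inc3[OF assms(3)] by simp
  qed
  ultimately show ?thesis using inc_H[OF assms(2,3)] by simp
qed

lemma cubic_H: assumes "2 \<le> k" shows "cubic (VH k) (EH k) (endsH k)"
proof -
  have A: "endsH k h \<subseteq> VH k \<and> card (endsH k h) = 2" if h: "h \<in> EH k" for h
  proof -
    from h consider (c) i e where "i < k" "e \<in> E" "e \<noteq> e0" "h = 2 * enc i e" | (n) p where "p < k" "h = 2*p+1"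
      by (auto simp: EH_def)
    then show ?thesis
    proof cases
      case c
      have "card (enc i ` ends e) = 2" using ends2[OF c(2)] by (subst card_image) (auto simp: inj_on_def)
      then show ?thesis using c endsV[OF c(2)] by auto
    next
      case n
      have "nxt k p < k" using n(1) by (auto simp: nxt_def)
      then show ?thesis using n uv uV vV by auto
    qed
  qed
  have B: "card (incident_edges (EH k) (endsH k) a) = 3" if "a \<in> VH k" for a
  proof -
    from that obtain i x where "i < k" "x \<in> V" "a = enc i x" by (auto simp: VH_mem)
    then show ?thesis using card_inc_H assms by simp
  qed
  show ?thesis unfolding cubic_def multigraph_def using A B finVH finEH by blast
qed


end

definition ridx :: "nat \<Rightarrow> nat \<Rightarrow> nat \<Rightarrow> nat" where
  "ridx k j d = (if j + 1 + d < k then j + 1 + d else j + 1 + d - k)"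

lemma ridx1: "2 \<le> k \<Longrightarrow> j < k \<Longrightarrow> d \<le> k - 2 \<Longrightarrow> ridx k j d < k \<and> ridx k j d \<noteq> j"
  by (auto simp: ridx_def)
lemma ridx2: "j < k \<Longrightarrow> ridx k j 0 = nxt k j"
  by (auto simp: ridx_def nxt_def)
lemma ridx3: "2 \<le> k \<Longrightarrow> j < k \<Longrightarrow> Suc d \<le> k - 2 \<Longrightarrow> ridx k j (Suc d) = nxt k (ridx k j d)"
  by (auto simp: ridx_def nxt_def)
lemma ridx4: "2 \<le> k \<Longrightarrow> j < k \<Longrightarrow> i < k \<Longrightarrow> i \<noteq> j \<Longrightarrow> \<exists>d \<le> k - 2. ridx k j d = i"
proof (cases "j < i")
  case True
  assume "2 \<le> k" "j < k" "i < k"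
  then show ?thesis using True by (intro exI[of _ "i - j - 1"]) (auto simp: ridx_def)
next
  case False
  assume "2 \<le> k" "j < k" "i < k" "i \<noteq> j"
  then show ?thesis using False by (intro exI[of _ "i + k - j - 1"]) (auto simp: ridx_def)
qed
lemma ridx5: "2 \<le> k \<Longrightarrow> j < k \<Longrightarrow> nxt k (ridx k j (k - 2)) = j"
  by (auto simp: ridx_def nxt_def)

context cg begin

lemma lift:
  assumes "(adj_in (E-{e0}) ends S)\<^sup>*\<^sup>* a b" "i < k" "enc i ` S \<subseteq> T"
  shows "(adj_in (EH k) (endsH k) T)\<^sup>*\<^sup>* (enc i a) (enc i b)"
  using assms(1)
proof (induction rule: rtranclp.induct)
  case (rtrancl_into_rtrancl a b c)
  from rtrancl_into_rtrancl(2) obtain e where e: "e \<in> E" "e \<noteq> e0" "ends e = {b, c}" "b \<in> S" "c \<in> S"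
    by (auto simp: adj_in_def)
  have "adj_in (EH k) (endsH k) T (enc i b) (enc i c)"
    unfolding adj_in_def
    using e assms(2,3) by (intro conjI bexI[of _ "2 * enc i e"]) auto
  then show ?case using rtrancl_into_rtrancl(3) by (meson rtranclp.rtrancl_into_rtrancl)
qed auto

lemma con_adj:
  assumes "p < k" "enc p v \<in> T" "enc (nxt k p) u \<in> T"
  shows "adj_in (EH k) (endsH k) T (enc p v) (enc (nxt k p) u)"
  unfolding adj_in_def using assms by (intro conjI bexI[of _ "2 * p + 1"]) auto

lemma nxt_lt: "p < k \<Longrightarrow> nxt k p < k" by (auto simp: nxt_def)

lemma conn_H_minus:
  assumes k2: "2 \<le> k" and j: "j < k" and x: "x \<in> V"
  shows "connected_on (EH k) (endsH k) (VH k - {enc j x})"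
proof -
  define T where "T = VH k - {enc j x}"
  define R where "R = (adj_in (EH k) (endsH k) T)\<^sup>*\<^sup>*"
  define t where "t = enc (nxt k j) u"
  have copyconn: "R (enc i y) (enc i u)" if "i < k" "i \<noteq> j" "y \<in> V" for i y
    unfolding R_def using that by (intro lift[OF conn_minus]) (auto simp: T_def)
  have claim: "\<forall>y\<in>V. R (enc (ridx k j d) y) t" if "d \<le> k - 2" for d
    using that
  proof (induction d)
    case 0
    then show ?case using copyconn[of "ridx k j 0"] ridx1[OF k2 j, of 0] ridx2[OF j] by (simp add: t_def)
  next
    case (Suc d)
    let ?p = "ridx k j d" and ?i = "ridx k j (Suc d)"
    have p: "?p < k" "?p \<noteq> j" using ridx1[OF k2 j, of d] Suc(2) by auto
    have i: "?i < k" "?i \<noteq> j" using ridx1[OF k2 j, of "Suc d"] Suc(2) by auto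
    have ii: "?i = nxt k ?p" using ridx3[OF k2 j Suc(2)] .
    have "adj_in (EH k) (endsH k) T (enc ?p v) (enc (nxt k ?p) u)"
      using p i ii vV uV by (intro con_adj) (auto simp: T_def)
    then have a: "R (enc ?i u) (enc ?p v)" unfolding R_def using ii by (auto dest: adj_sym)
    have b: "R (enc ?p v) t" using Suc vV by auto
    show ?case
    proof
      fix y assume "y \<in> V"
      then have "R (enc ?i y) (enc ?i u)" using copyconn i by auto
      then show "R (enc ?i y) t" using a b unfolding R_def by (meson rtranclp_trans)
    qed
  qed
  have all: "R a t" if "a \<in> T" for a
  proof -
    from that obtain i y where iy: "i < k" "y \<in> V" "a = enc i y" "\<not> (i = j \<and> y = x)"
      by (auto simp: T_def VH_mem)
    show ?thesis
    proof (cases "i = j")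
      case False
      then obtain d where "d \<le> k - 2" "ridx k j d = i" using ridx4[OF k2 j iy(1)] by auto
      then show ?thesis using claim iy by auto
    next
      case True
      then have yx: "y \<in> V - {x}" using iy by auto
      have cS: "connected_on E ends (V - {x})" using tc x by (auto simp: two_connected_def)
      have sub: "enc j ` (V - {x}) \<subseteq> T" using j by (auto simp: T_def)
      have "u \<in> V - {x} \<or> v \<in> V - {x}" using uv uV vV by auto
      from reach_uv[OF cS yx this] show ?thesis
      proof
        assume h: "u \<in> V - {x} \<and> (adj_in (E - {e0}) ends (V - {x}))\<^sup>*\<^sup>* y u"
        have r1: "R a (enc j u)" unfolding R_def iy(3) True using lift[OF conjunct2[OF h] j sub] .
        let ?p = "ridx k j (k - 2)"
        have p: "?p < k" "?p \<noteq> j" "nxt k ?p = j" using ridx1[OF k2 j, of "k-2"] ridx5[OF k2 j] by auto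
        have "adj_in (EH k) (endsH k) T (enc ?p v) (enc (nxt k ?p) u)"
          using p h vV j by (intro con_adj) (auto simp: T_def)
        then have r2: "R (enc j u) (enc ?p v)" unfolding R_def using p by (auto dest: adj_sym)
        have r3: "R (enc ?p v) t" using claim[of "k-2"] vV by auto
        show ?thesis using r1 r2 r3 unfolding R_def by (meson rtranclp_trans)
      next
        assume h: "v \<in> V - {x} \<and> (adj_in (E - {e0}) ends (V - {x}))\<^sup>*\<^sup>* y v"
        have r1: "R a (enc j v)" unfolding R_def iy(3) True using lift[OF conjunct2[OF h] j sub] .
        have "adj_in (EH k) (endsH k) T (enc j v) (enc (nxt k j) u)"
          using h uV j nxt_lt[OF j] ridx1[OF k2 j, of 0] ridx2[OF j] by (intro con_adj) (auto simp: T_def)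
        then have "R (enc j v) t" unfolding R_def t_def by auto
        then show ?thesis using r1 unfolding R_def by (meson rtranclp_trans)
      qed
    qed
  qed
  have tT: "t \<in> T" using ridx1[OF k2 j, of 0] ridx2[OF j] uV by (auto simp: T_def t_def)
  show ?thesis unfolding connected_on_def T_def[symmetric]
  proof (intro conjI ballI)
    show "T \<noteq> {}" using tT by auto
  next
    fix a b assume "a \<in> T" "b \<in> T"
    then have "R a t" "R t b" using all[of a] all[of b] reach_sym unfolding R_def by auto
    then show "(adj_in (EH k) (endsH k) T)\<^sup>*\<^sup>* a b" unfolding R_def by (meson rtranclp_trans)
  qed
qed


lemma cardV2: "2 \<le> card V" using tc by (simp add: two_connected_def)

lemma two_connected_H: assumes k2: "2 \<le> k" shows "two_connected (VH k) (EH k) (endsH k)"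
proof -
  have "2*2 \<le> k * card V" using mult_le_mono[OF k2 cardV2] .
  then have c4: "4 \<le> card (VH k)" using cardVH[of k] by simp
  have cm: "connected_on (EH k) (endsH k) (VH k - {w})" if "w \<in> VH k" for w
    using that conn_H_minus[OF k2] by (auto simp: VH_mem)
  have c: "connected_on (EH k) (endsH k) (VH k)"
    unfolding connected_on_def
  proof (intro conjI ballI)
    show "VH k \<noteq> {}" using c4 by auto
  next
    fix a b assume ab: "a \<in> VH k" "b \<in> VH k"
    have "\<not> VH k \<subseteq> {a, b}"
    proof
      assume "VH k \<subseteq> {a, b}"
      then have "card (VH k) \<le> card {a, b}" by (intro card_mono) auto
      also have "\<dots> \<le> 2" by (cases "a = b") auto
      finally show False using c4 by simp
    qed
    then obtain w where w: "w \<in> VH k" "w \<noteq> a" "w \<noteq> b" by auto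
    have "(adj_in (EH k) (endsH k) (VH k - {w}))\<^sup>*\<^sup>* a b"
      using cm[OF w(1)] ab w by (auto simp: connected_on_def)
    then show "(adj_in (EH k) (endsH k) (VH k))\<^sup>*\<^sup>* a b" by (rule reach_mono) auto
  qed
  show ?thesis unfolding two_connected_def using c4 c cm by auto
qed

lemma span_eq:
  assumes "i < k" "e \<in> E" "e \<noteq> e0" "u \<notin> ends e" "v \<notin> ends e"
    and cG: "\<And>e. e \<in> E \<Longrightarrow> e \<noteq> e0 \<Longrightarrow> cG e = c (2 * enc i e)"
  shows "edge_color_span (EH k) (endsH k) c (2 * enc i e) = edge_color_span E ends cG e"
proof -
  have "colors_at (EH k) (endsH k) c (enc i x) = colors_at E ends cG x" if x: "x \<in> ends e" for x
  proof -
    have xV: "x \<in> V" and xuv: "x \<noteq> u" "x \<noteq> v" using x endsV[OF assms(2)] assms(4,5) by auto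
    have ne: "e0 \<notin> incident_edges E ends x" using xuv e0e by (auto simp: incident_edges_def)
    have "colors_at (EH k) (endsH k) c (enc i x) = c ` (\<lambda>e. 2 * enc i e) ` (incident_edges E ends x)"
      unfolding colors_at_def inc_H[OF assms(1) xV] using xuv ne by auto
    also have "\<dots> = cG ` incident_edges E ends x" unfolding image_image
    proof (rule image_cong[OF refl])
      fix e' assume "e' \<in> incident_edges E ends x"
      then have "e' \<in> E" "e' \<noteq> e0" using ne by (auto simp: incident_edges_def)
      then show "c (2 * enc i e') = cG e'" using cG by simp
    qed
    finally show ?thesis by (simp add: colors_at_def)
  qed
  then show ?thesis unfolding edge_color_span_def endsH_copy by (simp add: image_image)
qed

lemma copy_abnormal:
  assumes bad: "\<forall>c. proper_edge_coloring 5 E ends c \<longrightarrow> 5 < card (abnormal_edges E ends c)"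
    and c: "proper_edge_coloring 5 (EH k) (endsH k) c" and i: "i < k"
  shows "\<exists>e. e \<in> E \<and> e \<noteq> e0 \<and> 2 * enc i e \<in> abnormal_edges (EH k) (endsH k) c"
proof (rule ccontr)
  assume none: "\<not> ?thesis"
  let ?U = "incident_edges E ends u" and ?W = "incident_edges E ends v"
  have fU: "finite ?U" "finite ?W" using finE by (auto simp: incident_edges_def)
  have e0U: "e0 \<in> ?U" "e0 \<in> ?W" using e0E e0e by (auto simp: incident_edges_def)
  have "card (?U \<union> ?W - {e0}) \<le> card (?U - {e0}) + card (?W - {e0})"
    unfolding Un_Diff by (rule card_Un_le)
  also have "\<dots> = 4" using inc3[OF uV] inc3[OF vV] e0U fU by simp
  finally have c4: "card (?U \<union> ?W - {e0}) \<le> 4" .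
  define X where "X = c ` (\<lambda>e. 2 * enc i e) ` (?U \<union> ?W - {e0})"
  have "card X \<le> card ((\<lambda>e. 2 * enc i e) ` (?U \<union> ?W - {e0}))" unfolding X_def
    by (rule card_image_le) (use fU in auto)
  also have "\<dots> \<le> card (?U \<union> ?W - {e0})" by (rule card_image_le) (use fU in auto)
  also have "\<dots> \<le> 4" by (rule c4)
  finally have cX: "card X \<le> 4" .
  have "\<not> {1..5::nat} \<subseteq> X"
  proof
    assume "{1..5::nat} \<subseteq> X"
    then have "card {1..5::nat} \<le> card X" by (intro card_mono) (auto simp: X_def fU)
    then show False using cX by simp
  qed
  then obtain g where g: "g \<in> {1..5}" "g \<notin> X" by blast
  define cG where "cG = (\<lambda>e. if e = e0 then g else c (2 * enc i e))"
  have crange: "\<forall>h\<in>EH k. c h \<in> {1..5}" and cadj: "\<forall>h\<in>EH k. \<forall>h'\<in>EH k. h \<noteq> h' \<and> endsH k h \<inter> endsH k h' \<noteq> {} \<longrightarrow> c h \<noteq> c h'"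
    using c by (auto simp: proper_edge_coloring_def)
  have X: "cG e \<in> X" if "e \<in> E" "e \<noteq> e0" "ends e \<inter> ends e0 \<noteq> {}" for e
    using that e0e by (auto simp: X_def cG_def incident_edges_def)
  have pG: "proper_edge_coloring 5 E ends cG"
    unfolding proper_edge_coloring_def
  proof (intro conjI ballI impI)
    fix e assume "e \<in> E" then show "cG e \<in> {1..5}" using crange g i by (auto simp: cG_def)
  next
    fix e e' assume ee: "e \<in> E" "e' \<in> E" "e \<noteq> e' \<and> ends e \<inter> ends e' \<noteq> {}"
    show "cG e \<noteq> cG e'"
    proof (cases "e = e0 \<or> e' = e0")
      case True
      then show ?thesis
      proof
        assume "e = e0" then show ?thesis using X[of e'] ee g by (auto simp: cG_def)
      next
        assume "e' = e0" then show ?thesis using X[of e] ee g by (auto simp: cG_def Int_commute)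
      qed
    next
      case False
      have "endsH k (2 * enc i e) \<inter> endsH k (2 * enc i e') \<noteq> {}" using ee by auto
      then show ?thesis using cadj ee False i by (auto simp: cG_def)
    qed
  qed
  have sub: "abnormal_edges E ends cG \<subseteq> ?U \<union> ?W"
  proof
    fix e assume e: "e \<in> abnormal_edges E ends cG"
    show "e \<in> ?U \<union> ?W"
    proof (rule ccontr)
      assume "e \<notin> ?U \<union> ?W"
      then have ne: "e \<noteq> e0" "u \<notin> ends e" "v \<notin> ends e" using e e0U by (auto simp: incident_edges_def abnormal_edges_def)
      have eE: "e \<in> E" using e by (simp add: abnormal_edges_def)
      have "edge_color_span (EH k) (endsH k) c (2 * enc i e) = edge_color_span E ends cG e"
        using span_eq[OF i eE ne, of cG c] by (simp add: cG_def)
      then have "2 * enc i e \<in> abnormal_edges (EH k) (endsH k) c"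
        using e eE ne i by (auto simp: abnormal_edges_def poor_edge_def rich_edge_def)
      then show False using none eE ne by auto
    qed
  qed
  have "card (?U \<union> ?W) + card (?U \<inter> ?W) = card ?U + card ?W" using card_Un_Int fU by metis
  moreover have "1 \<le> card (?U \<inter> ?W)" using e0U fU by (auto simp: Suc_le_eq card_gt_0_iff)
  ultimately have "card (?U \<union> ?W) \<le> 5" using inc3[OF uV] inc3[OF vV] by simp
  then have "card (abnormal_edges E ends cG) \<le> 5" using card_mono[OF _ sub] fU by (meson finite_UnI le_trans)
  then show False using bad pG by auto
qed

lemma many_abnormal:
  assumes bad: "\<forall>c. proper_edge_coloring 5 E ends c \<longrightarrow> 5 < card (abnormal_edges E ends c)"
    and c: "proper_edge_coloring 5 (EH k) (endsH k) c"
  shows "k \<le> card (abnormal_edges (EH k) (endsH k) c)"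
proof -
  have "\<forall>i\<in>{..<k}. \<exists>e. e \<in> E \<and> e \<noteq> e0 \<and> 2 * enc i e \<in> abnormal_edges (EH k) (endsH k) c"
    using copy_abnormal[OF bad c] by auto
  then obtain g where g: "\<forall>i\<in>{..<k}. g i \<in> E \<and> g i \<noteq> e0 \<and> 2 * enc i (g i) \<in> abnormal_edges (EH k) (endsH k) c"
    by metis
  have inj: "inj_on (\<lambda>i. 2 * enc i (g i)) {..<k}" by (auto simp: inj_on_def)
  have fin: "finite (abnormal_edges (EH k) (endsH k) c)" using finEH by (simp add: abnormal_edges_def)
  have "card {..<k} \<le> card (abnormal_edges (EH k) (endsH k) c)"
    by (rule card_inj_on_le[OF inj _ fin]) (use g in auto)
  then show ?thesis by simp
qed

end

theorem mainTheorem2: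
  shows "(\<forall>V E ends. cubic V E ends \<and> two_connected V E ends \<longrightarrow>
            (\<exists>c. proper_edge_coloring 5 E ends c \<and> card (abnormal_edges E ends c) \<le> 5))
     \<longleftrightarrow>
         (\<exists>f. sublinear f \<and>
            (\<forall>V E ends. cubic V E ends \<and> two_connected V E ends \<longrightarrow>
              (\<exists>c. proper_edge_coloring 5 E ends c \<and>
                   card (abnormal_edges E ends c) \<le> f (card V))))"
proof
  assume a: "\<forall>V E ends. cubic V E ends \<and> two_connected V E ends \<longrightarrow>
            (\<exists>c. proper_edge_coloring 5 E ends c \<and> card (abnormal_edges E ends c) \<le> 5)"
  have "sublinear (\<lambda>_. 5)" unfolding sublinear_def using lim_const_over_n[of "5::real"] by simp
  then show "\<exists>f. sublinear f \<and>
            (\<forall>V E ends. cubic V E ends \<and> two_connected V E ends \<longrightarrow>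
              (\<exists>c. proper_edge_coloring 5 E ends c \<and>
                   card (abnormal_edges E ends c) \<le> f (card V)))"
    using a by (intro exI[of _ "\<lambda>_. 5"]) auto
next
  assume "\<exists>f. sublinear f \<and>
            (\<forall>V E ends. cubic V E ends \<and> two_connected V E ends \<longrightarrow>
              (\<exists>c. proper_edge_coloring 5 E ends c \<and>
                   card (abnormal_edges E ends c) \<le> f (card V)))"
  then obtain f where sl: "sublinear f" and fb: "\<And>V E ends. cubic V E ends \<Longrightarrow> two_connected V E ends \<Longrightarrow>
              (\<exists>c. proper_edge_coloring 5 E ends c \<and>
                   card (abnormal_edges E ends c) \<le> f (card V))" by blast
  show "\<forall>V E ends. cubic V E ends \<and> two_connected V E ends \<longrightarrow>
            (\<exists>c. proper_edge_coloring 5 E ends c \<and> card (abnormal_edges E ends c) \<le> 5)"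
  proof (rule ccontr)
    assume "\<not> ?thesis"
    then obtain V E ends where cub: "cubic V E ends" and tc: "two_connected V E ends"
      and bad: "\<forall>c. proper_edge_coloring 5 E ends c \<longrightarrow> 5 < card (abnormal_edges E ends c)"
      by force
    have "V \<noteq> {}" using tc by (auto simp: two_connected_def)
    then obtain x where x: "x \<in> V" by auto
    have "card (incident_edges E ends x) = 3" using cub x by (simp add: cubic_def)
    then have "incident_edges E ends x \<noteq> {}" by auto
    then obtain e0 where e0: "e0 \<in> E" "x \<in> ends e0" by (fastforce simp: incident_edges_def)
    have "card (ends e0) = 2" using cub e0 by (simp add: cubic_def multigraph_def)
    then obtain a b where ab: "ends e0 = {a, b}" "a \<noteq> b" by (auto simp: card_2_iff)
    interpret cg V E ends a b e0 using cub tc e0 ab by unfold_locales auto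
    define n where "n = card V"
    have n2: "2 \<le> n" using cardV2 by (simp add: n_def)
    have kf: "real k \<le> real (f (k * n))" if k2: "2 \<le> k" for k
    proof -
      obtain c where c: "proper_edge_coloring 5 (EH k) (endsH k) c"
        "card (abnormal_edges (EH k) (endsH k) c) \<le> f (card (VH k))"
        using fb[OF cubic_H[OF k2] two_connected_H[OF k2]] by blast
      have "k \<le> f (k * n)" using many_abnormal[OF bad c(1)] c(2) cardVH[of k] by (simp add: n_def)
      then show ?thesis by simp
    qed
    have sm: "strict_mono (\<lambda>k. k * n)" using n2 by (auto simp: strict_mono_def)
    have lim: "(\<lambda>k. real (f (k * n)) / real (k * n)) \<longlonglongrightarrow> 0"
      using LIMSEQ_subseq_LIMSEQ[OF sl[unfolded sublinear_def] sm] by (simp add: o_def)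
    have ev1: "eventually (\<lambda>k. real (f (k * n)) / real (k * n) < 1 / real n) sequentially"
      using order_tendstoD(2)[OF lim] n2 by simp
    have ev2: "eventually (\<lambda>k. 2 \<le> k) sequentially" by (rule eventually_ge_at_top)
    obtain k where k: "2 \<le> k" "real (f (k * n)) / real (k * n) < 1 / real n"
    proof -
      assume h: "\<And>k. 2 \<le> k \<Longrightarrow> real (f (k * n)) / real (k * n) < 1 / real n \<Longrightarrow> thesis"
      from eventually_conj[OF ev1 ev2] obtain N where "\<forall>m\<ge>N. real (f (m * n)) / real (m * n) < 1 / real n \<and> 2 \<le> m"
        unfolding eventually_sequentially by blast
      then show thesis using h[of N] by auto
    qed
    have "1 / real n = real k / real (k * n)" using k(1) n2 by (simp add: field_simps)
    also have "\<dots> \<le> real (f (k * n)) / real (k * n)"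
      using kf[OF k(1)] by (intro divide_right_mono) auto
    finally show False using k(2) by simp
  qed
qed

end
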